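(* Assume (A.a) and (A.b). Let $\beta\in[0,1)$, $\lambda\in[0,\frac{\beta}{1-\beta}]$, and step sizes $\{\alpha_k\}_k\subset(0,\infty)$ with $\alpha_k\le\frac{(1-\beta)(1-\beta^m)}{4Lm}$ for all $k$, $\sum_{k=1}^\infty\alpha_k=\infty$ and $\sum_{k=1}^\infty\alpha_k^3<\infty$, and let the sequences be generated by RRM with arbitrary permutations. Then $\|z^k-x^k\|\to0$ as $k\to\infty$.
   Context: Let $n,d\in\mathbb N$, $f_1,\dots,f_n:\mathbb R^d\to\mathbb R$ continuously differentiable, $f:=\frac1n\sum_{i=1}^n f_i$, $[n]:=\{1,\dots,n\}$. Fix a mini-batch size $b\in\mathbb N$ with $m:=n/b\in\mathbb N$. Random reshuffling with momentum (RRM) with step sizes $\{\alpha_k\}_{k\ge1}\subset(0,\infty)$ and parameters $\beta,\lambda$ generates sequences as follows: start with $x^1=\tilde x^1\in\mathbb R^d$; for each $k=1,2,\dots$ choose a permutation $\pi^k=(\pi^k_1,\dots,\pi^k_n)$ of $[n]$, set $y_0^k=\tilde x^k$, $y_1^k=x^k$, and for $i=1,\dots,m$ compute $\hat y_i^k=y_i^k+\lambda(y_i^k-y_{i-1}^k)$, $d_i^k=\frac1b\sum_{j=(i-1)b+1}^{ib}\nabla f_{\pi^k_j}(\hat y_i^k)$, $y_{i+1}^k=y_i^k-\alpha_kd_i^k+\beta(y_i^k-y_{i-1}^k)$; then set $\tilde x^{k+1}=y_m^k$, $x^{k+1}=y_{m+1}^k$. The proxy iterates are $z^k:=\frac{1}{1-\beta}x^k-\frac{\beta}{1-\beta}\tilde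 x^k$. Assumption (A.a): there are $L>0$ and $\bar f\in\mathbb R$ such that each $\nabla f_i$ is $L$-Lipschitz and $f_i(x)\ge\bar f$ for all $x\in\mathbb R^d$, $i\in[n]$. Assumption (A.b): $\{\alpha_k\}_k$ is non-increasing. *)

theory Defs
  imports "HOL-Analysis.Analysis"
begin

text \<open>One inner step of RRM in epoch k. The state (yp, yc) = (y_i, y_{i+1}) is mapped to
  (y_{i+1}, y_{i+2}); the mini-batch used is j = i*b+1 .. (i+1)*b of permutation ps.\<close>
definition rrm_step ::
  "(nat \<Rightarrow> 'a::euclidean_space \<Rightarrow> 'a) \<Rightarrow> nat \<Rightarrow> real \<Rightarrow> real \<Rightarrow> real \<Rightarrow>
   (nat \<Rightarrow> nat) \<Rightarrow> nat \<Rightarrow> 'a \<times> 'a \<Rightarrow> 'a \<times> 'a" where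
  "rrm_step grad b a beta lam ps i st =
     (let yp = fst st; yc = snd st;
          yh = yc + lam *\<^sub>R (yc - yp);
          d = (1 / real b) *\<^sub>R (\<Sum>j\<in>{i*b+1..(i+1)*b}. grad (ps j) yh)
      in (yc, yc - a *\<^sub>R d + beta *\<^sub>R (yc - yp)))"

text \<open>Inner loop: rrm_inner ... i = (y_i^k, y_{i+1}^k), starting from (y_0, y_1) = (xt^k, x^k).\<close>
primrec rrm_inner ::
  "(nat \<Rightarrow> 'a::euclidean_space \<Rightarrow> 'a) \<Rightarrow> nat \<Rightarrow> real \<Rightarrow> real \<Rightarrow> real \<Rightarrow>
   (nat \<Rightarrow> nat) \<Rightarrow> 'a \<times> 'a \<Rightarrow> nat \<Rightarrow> 'a \<times> 'a" where
  "rrm_inner grad b a beta lam ps st 0 = st"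
| "rrm_inner grad b a beta lam ps st (Suc i) =
     rrm_step grad b a beta lam ps i (rrm_inner grad b a beta lam ps st i)"

text \<open>Outer loop: rrm_state ... k = (xt^k, x^k) for k \<ge> 1, with xt^1 = x^1 = x1.
  Epoch k uses step size alpha k and permutation ps k; m = number of mini-batches.
  (The value at k = 0 is an irrelevant convention.)\<close>
fun rrm_state ::
  "(nat \<Rightarrow> 'a::euclidean_space \<Rightarrow> 'a) \<Rightarrow> nat \<Rightarrow> nat \<Rightarrow> (nat \<Rightarrow> real) \<Rightarrow> real \<Rightarrow> real \<Rightarrow>
   (nat \<Rightarrow> nat \<Rightarrow> nat) \<Rightarrow> 'a \<Rightarrow> nat \<Rightarrow> 'a \<times> 'a" where
  "rrm_state grad b m alpha beta lam ps x1 0 = (x1, x1)"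
| "rrm_state grad b m alpha beta lam ps x1 (Suc 0) = (x1, x1)"
| "rrm_state grad b m alpha beta lam ps x1 (Suc (Suc k)) =
     rrm_inner grad b (alpha (Suc k)) beta lam (ps (Suc k))
       (rrm_state grad b m alpha beta lam ps x1 (Suc k)) m"

end

theory Submission
  imports Defs "HOL-Combinatorics.Permutations"
begin


locale rrm_setup =
  fixes f :: "nat \<Rightarrow> 'a::euclidean_space \<Rightarrow> real"
    and grad :: "nat \<Rightarrow> 'a \<Rightarrow> 'a"
    and n b m :: nat and L fbar beta lam :: real
  assumes n_pos: "n \<ge> 1" and b_pos: "b \<ge> 1" and m_def: "n = m * b"
    and deriv: "\<And>i x. i \<in> {1..n} \<Longrightarrow> (f i has_derivative (\<lambda>h. grad i x \<bullet> h)) (at x)"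
    and L_pos: "L > 0"
    and lip: "\<And>i x y. i \<in> {1..n} \<Longrightarrow> norm (grad i x - grad i y) \<le> L * norm (x - y)"
    and lower: "\<And>i x. i \<in> {1..n} \<Longrightarrow> f i x \<ge> fbar"
    and beta0: "0 \<le> beta" and beta1: "beta < 1"
    and lam0: "0 \<le> lam" and lam1: "lam \<le> beta / (1 - beta)"
begin

definition "K = 2 / (1 - beta)"
definition "F x = (\<Sum>j\<in>{1..n}. f j x - fbar)"
definition "GF x = (\<Sum>j\<in>{1..n}. grad j x)"
definition "Gs x = (\<Sum>j\<in>{1..n}. norm (grad j x))"
definition "Bt t = {t*b+1..(t+1)*b}"

lemma m_pos: "m \<ge> 1" using n_pos m_def by (cases m) auto
lemma K_pos: "K > 0" using beta1 by (simp add: K_def)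

lemma descent1:
  assumes j: "j \<in> {1..n}"
  shows "f j y \<le> f j x + grad j x \<bullet> (y - x) + L * norm (y - x)^2"
proof -
  let ?g = "\<lambda>t::real. f j (x + t *\<^sub>R (y - x))"
  have der: "DERIV ?g t :> grad j (x + t *\<^sub>R (y - x)) \<bullet> (y - x)" for t
  proof -
    have "((\<lambda>t. x + t *\<^sub>R (y - x)) has_derivative (\<lambda>h. h *\<^sub>R (y - x))) (at t)"
      by (auto intro!: derivative_eq_intros)
    from has_derivative_compose[OF this deriv[OF j]]
    have "(?g has_derivative (\<lambda>h. grad j (x + t *\<^sub>R (y - x)) \<bullet> (h *\<^sub>R (y - x)))) (at t)" .
    moreover have "(\<lambda>h. grad j (x + t *\<^sub>R (y - x)) \<bullet> (h *\<^sub>R (y - x))) = (*) (grad j (x + t *\<^sub>R (y - x)) \<bullet> (y - x))"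
      by (auto simp: fun_eq_iff inner_scaleR_right)
    ultimately show ?thesis unfolding has_field_derivative_def by simp
  qed
  obtain s where s: "0 < s" "s < 1" "?g 1 - ?g 0 = (1 - 0) * (grad j (x + s *\<^sub>R (y - x)) \<bullet> (y - x))"
    using MVT2[of 0 1 ?g, OF _ der] by auto
  have "(grad j (x + s *\<^sub>R (y - x)) - grad j x) \<bullet> (y - x)
        \<le> norm (grad j (x + s *\<^sub>R (y - x)) - grad j x) * norm (y - x)"
    by (rule norm_cauchy_schwarz)
  also have "\<dots> \<le> L * norm (s *\<^sub>R (y - x)) * norm (y - x)"
    using lip[OF j, of "x + s *\<^sub>R (y - x)" x] by (simp add: mult_right_mono)
  also have "\<dots> \<le> L * norm (y - x) * norm (y - x)"
  proof -
    have "s * (norm (y - x) * norm (y - x)) \<le> 1 * (norm (y - x) * norm (y - x))"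
      using s by (intro mult_right_mono) auto
    then show ?thesis using s L_pos by (simp add: mult_left_mono mult.assoc)
  qed
  finally have "(grad j (x + s *\<^sub>R (y - x)) - grad j x) \<bullet> (y - x) \<le> L * norm (y - x)^2"
    by (simp add: power2_eq_square mult.assoc)
  then show ?thesis using s(3) by (simp add: inner_diff_left)
qed

lemma grad_sq:
  assumes j: "j \<in> {1..n}"
  shows "norm (grad j x)^2 \<le> 4 * L * (f j x - fbar)"
proof -
  let ?y = "x - (1 / (2*L)) *\<^sub>R grad j x"
  have "fbar \<le> f j ?y" using lower[OF j] .
  also have "\<dots> \<le> f j x + grad j x \<bullet> (?y - x) + L * norm (?y - x)^2" by (rule descent1[OF j])
  also have "\<dots> = f j x - norm (grad j x)^2 / (4 * L)"
    using L_pos by (simp add: inner_scaleR_right power2_norm_eq_inner[symmetric] power_mult_distrib field_simps power2_eq_square)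
  finally show ?thesis using L_pos by (simp add: field_simps)
qed

lemma F_nonneg: "F x \<ge> 0"
  unfolding F_def by (rule sum_nonneg) (use lower in auto)

lemma descentF: "F y \<le> F x + GF x \<bullet> (y - x) + n * L * norm (y - x)^2"
proof -
  have "F y \<le> (\<Sum>j\<in>{1..n}. f j x - fbar + grad j x \<bullet> (y - x) + L * norm (y - x)^2)"
    unfolding F_def
  proof (rule sum_mono)
    fix j assume "j \<in> {1..n}"
    from descent1[OF this, of y x] show "f j y - fbar \<le> f j x - fbar + grad j x \<bullet> (y - x) + L * norm (y - x)^2" by simp
  qed
  also have "\<dots> = F x + GF x \<bullet> (y - x) + n * L * norm (y - x)^2"
    by (simp add: F_def GF_def sum.distrib inner_sum_left)
  finally show ?thesis .
qed

lemma Gs_sq: "Gs x ^ 2 \<le> 4 * n * L * F x"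
proof -
  have "Gs x ^ 2 = (\<Sum>j\<in>{1..n}. norm (grad j x) * 1)^2" by (simp add: Gs_def)
  also have "\<dots> \<le> (\<Sum>j\<in>{1..n}. norm (grad j x)^2) * (\<Sum>j\<in>{1..n}. 1^2)"
    by (rule Cauchy_Schwarz_ineq_sum)
  also have "\<dots> = (\<Sum>j\<in>{1..n}. norm (grad j x)^2) * n" by simp
  also have "\<dots> \<le> (\<Sum>j\<in>{1..n}. 4 * L * (f j x - fbar)) * n"
    by (intro mult_right_mono sum_mono grad_sq) auto
  also have "\<dots> = 4 * n * L * F x" by (simp add: F_def sum_distrib_left[symmetric])
  finally show ?thesis .
qed

lemma Bt_sum: "(\<Sum>t<k. \<Sum>j\<in>Bt t. h j) = (\<Sum>j\<in>{1..k*b}. h j)"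
proof (induction k)
  case 0 then show ?case by simp
next
  case (Suc k)
  have "{1..Suc k * b} = {1..k*b} \<union> Bt k" by (auto simp: Bt_def)
  moreover have "{1..k*b} \<inter> Bt k = {}" by (auto simp: Bt_def)
  ultimately have "(\<Sum>j\<in>{1..Suc k*b}. h j) = (\<Sum>j\<in>{1..k*b}. h j) + (\<Sum>j\<in>Bt k. h j)"
    by (simp add: Bt_def sum.union_disjoint)
  then show ?case using Suc by simp
qed

lemma Bt_card: "card (Bt t) = b" by (simp add: Bt_def)

lemma Bt_sub: "t < m \<Longrightarrow> Bt t \<subseteq> {1..n}"
proof -
  assume "t < m"
  then have "(t+1)*b \<le> m*b" by (intro mult_right_mono) auto
  then show ?thesis by (auto simp: Bt_def m_def)
qed

lemma perm_sum: "ps permutes {1..n} \<Longrightarrow> (\<Sum>j\<in>{1..n}. h (ps j)) = (\<Sum>j\<in>{1..n}. h j)"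
  using sum.reindex_bij_betw[OF permutes_imp_bij] by blast

end



locale rrm_epoch = rrm_setup +
  fixes a :: real and ps :: "nat \<Rightarrow> nat" and p q :: 'a
  assumes a_pos: "0 < a" and a_small1: "real m * (L::real) * K * a \<le> 1/2"
    and a_small2: "4 * real n * (L::real) * a \<le> (1 - beta) * real b"
    and perm: "ps permutes {1..n}"
begin

definition "Y t = rrm_inner grad b a beta lam ps (p, q) t"
definition "v t = snd (Y t) - fst (Y t)"
definition "w t = (1 / (1 - beta)) *\<^sub>R snd (Y t) - (beta / (1 - beta)) *\<^sub>R fst (Y t)"
definition "yh t = snd (Y t) + lam *\<^sub>R v t"
definition "d t = (1 / real b) *\<^sub>R (\<Sum>j\<in>Bt t. grad (ps j) (yh t))"
definition "z = w 0"
definition "u = v 0"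
definition "D = (\<Sum>t<m. norm (d t))"
definition "E = (\<Sum>t<m. \<Sum>j\<in>Bt t. grad (ps j) (yh t) - grad (ps j) z)"

lemma Y_Suc: "Y (Suc t) = (snd (Y t), snd (Y t) - a *\<^sub>R d t + beta *\<^sub>R v t)"
  by (simp add: Y_def rrm_step_def Let_def d_def yh_def v_def Bt_def)

lemma v_Suc: "v (Suc t) = beta *\<^sub>R v t - a *\<^sub>R d t"
  by (simp add: v_def Y_Suc algebra_simps)

lemma w_Suc: "w (Suc t) = w t - (a / (1 - beta)) *\<^sub>R d t"
proof -
  have ne: "1 - beta \<noteq> 0" using beta1 by simp
  have "(1 - beta) *\<^sub>R w (Suc t) = (1 - beta) *\<^sub>R (w t - (a / (1 - beta)) *\<^sub>R d t)"
    using ne by (simp add: w_def Y_Suc v_def algebra_simps)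
  then show ?thesis using ne by simp
qed

lemma yh_w: "yh t - w t = (lam - beta / (1 - beta)) *\<^sub>R v t"
proof -
  have ne: "1 - beta \<noteq> 0" using beta1 by simp
  have e: "1 / (1 - beta) = 1 + beta / (1 - beta)" using ne by (simp add: field_simps)
  show ?thesis unfolding w_def yh_def v_def e by (simp add: algebra_simps)
qed

lemma w_sum: "w t = z - (a / (1 - beta)) *\<^sub>R (\<Sum>s<t. d s)"
  by (induction t) (simp_all add: z_def w_Suc scaleR_add_right)

lemma v_bound: "norm (v t) \<le> beta^t * norm u + a * (\<Sum>s<t. norm (d s))"
proof (induction t)
  case 0 then show ?case by (simp add: u_def)
next
  case (Suc t)
  have "norm (v (Suc t)) \<le> beta * norm (v t) + a * norm (d t)"
    unfolding v_Suc using beta0 a_pos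
    by (metis (no_types) abs_of_nonneg less_imp_le norm_scaleR norm_triangle_ineq4 order.trans order_refl)
  also have "\<dots> \<le> beta * (beta^t * norm u + a * (\<Sum>s<t. norm (d s))) + a * norm (d t)"
    using Suc beta0 by (simp add: mult_left_mono)
  also have "\<dots> \<le> beta^Suc t * norm u + a * (\<Sum>s<Suc t. norm (d s))"
  proof -
    have "beta * (a * (\<Sum>s<t. norm (d s))) \<le> 1 * (a * (\<Sum>s<t. norm (d s)))"
      using beta1 a_pos by (intro mult_right_mono mult_nonneg_nonneg sum_nonneg) auto
    then show ?thesis by (simp add: algebra_simps)
  qed
  finally show ?case .
qed

lemma psum_le_D: "t \<le> m \<Longrightarrow> (\<Sum>s<t. norm (d s)) \<le> D"
  unfolding D_def by (rule sum_mono2) auto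

lemma D_nonneg: "D \<ge> 0" unfolding D_def by (auto intro: sum_nonneg)

lemma v_bound2: "t \<le> m \<Longrightarrow> norm (v t) \<le> norm u + a * D"
proof -
  assume t: "t \<le> m"
  have "beta^t * norm u \<le> 1 * norm u" using beta0 beta1
    by (intro mult_right_mono) (auto simp: power_le_one)
  moreover have "a * (\<Sum>s<t. norm (d s)) \<le> a * D" using psum_le_D[OF t] a_pos by simp
  ultimately show ?thesis using v_bound[of t] by linarith
qed

lemma w_bound: "norm (w t - z) \<le> a / (1 - beta) * (\<Sum>s<t. norm (d s))"
proof -
  have "norm (w t - z) = a / (1 - beta) * norm (\<Sum>s<t. d s)"
    using a_pos beta1 by (simp add: w_sum)
  also have "\<dots> \<le> a / (1 - beta) * (\<Sum>s<t. norm (d s))"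
    using a_pos beta1 by (intro mult_left_mono norm_sum) auto
  finally show ?thesis .
qed

lemma yh_bound: "t < m \<Longrightarrow> norm (yh t - z) \<le> K * (norm u + a * D)"
proof -
  assume t: "t < m"
  have c: "\<bar>lam - beta / (1 - beta)\<bar> \<le> 1 / (1 - beta)"
  proof -
    have "0 \<le> beta / (1 - beta)" using beta0 beta1 by simp
    then have "\<bar>lam - beta / (1 - beta)\<bar> \<le> beta / (1 - beta)" using lam0 lam1 by linarith
    also have "\<dots> \<le> 1 / (1 - beta)" using beta1 by (intro divide_right_mono) auto
    finally show ?thesis .
  qed
  have "norm (yh t - z) \<le> norm (yh t - w t) + norm (w t - z)"
    by (metis diff_add_cancel norm_triangle_ineq add_diff_eq)
  also have "norm (yh t - w t) \<le> 1 / (1 - beta) * (norm u + a * D)"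
    unfolding yh_w norm_scaleR using c v_bound2[of t] t beta1
    by (intro mult_mono) auto
  also have "norm (w t - z) \<le> a / (1 - beta) * D"
    using w_bound[of t] psum_le_D[of t] t a_pos beta1
    by (meson less_imp_le order_trans mult_left_mono divide_nonneg_pos diff_gt_0_iff_gt)
  also have "1 / (1 - beta) * (norm u + a * D) + a / (1 - beta) * D \<le> K * (norm u + a * D)"
  proof -
    have "1 / (1 - beta) * (norm u + a * D) + a / (1 - beta) * D = (norm u + 2 * a * D) / (1 - beta)"
      by (simp add: add_divide_distrib)
    also have "\<dots> \<le> (2 * norm u + 2 * a * D) / (1 - beta)"
      using beta1 by (intro divide_right_mono) auto
    also have "\<dots> = K * (norm u + a * D)" by (simp add: K_def)
    finally show ?thesis .
  qed
  finally show ?thesis by simp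
qed

end



context rrm_setup begin
definition "gam = beta ^ m"
definition "C1 = 8 * (n * L * K)^2 / ((1 - beta) * b)"
definition "C2 = 32 * (n * L * K)^2 * n * L / ((1 - beta) * b^3)"
definition "C3 = 32 * n * L / (b^2 * (1 - gam))"
definition "C4 = 8 * (m * L * K)^2 / (1 - gam)"

lemma gam_lt1: "gam < 1" and gam_nonneg: "gam \<ge> 0"
  using m_pos beta0 beta1 by (auto simp: gam_def power_less_one_iff)

lemma sq_convex:
  fixes g U Y A :: real
  assumes "0 \<le> g" "g < 1" "0 \<le> A" "A \<le> g * U + Y"
  shows "A^2 \<le> g * U^2 + Y^2 / (1 - g)"
proof -
  have "A^2 \<le> (g * U + Y)^2" using assms by (intro power_mono) auto
  also have "(g * U + Y)^2 \<le> g * U^2 + Y^2 / (1 - g)"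
  proof -
    have id: "(1 - g) * (g * U + Y)^2 + g * ((1 - g) * U - Y)^2 = (1 - g) * (g * U^2) + Y^2"
      by (simp add: algebra_simps power2_eq_square)
    have "0 \<le> g * ((1 - g) * U - Y)^2" using assms by simp
    then have "(1 - g) * (g * U + Y)^2 \<le> (1 - g) * (g * U^2) + Y^2" using id by linarith
    also have "\<dots> = (1 - g) * (g * U^2 + Y^2 / (1 - g))" using assms by (simp add: field_simps)
    finally show ?thesis using assms by (simp add: mult_le_cancel_left_pos)
  qed
  finally show ?thesis .
qed
end

context rrm_epoch begin

lemma ps_in: "t < m \<Longrightarrow> j \<in> Bt t \<Longrightarrow> ps j \<in> {1..n}"
proof -
  assume "t < m" "j \<in> Bt t"
  then have "j \<in> {1..n}" using Bt_sub by blast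
  then show ?thesis using permutes_in_image[OF perm] by simp
qed

lemma d_bound: "t < m \<Longrightarrow> norm (d t) \<le> (1 / b) * (\<Sum>j\<in>Bt t. norm (grad (ps j) z)) + L * K * (norm u + a * D)"
proof -
  assume t: "t < m"
  have "norm (d t) = (1 / b) * norm (\<Sum>j\<in>Bt t. grad (ps j) (yh t))"
    by (simp add: d_def)
  also have "\<dots> \<le> (1 / b) * (\<Sum>j\<in>Bt t. norm (grad (ps j) (yh t)))"
    by (intro mult_left_mono norm_sum) auto
  also have "\<dots> \<le> (1 / b) * (\<Sum>j\<in>Bt t. norm (grad (ps j) z) + L * K * (norm u + a * D))"
  proof (intro mult_left_mono sum_mono)
    fix j assume j: "j \<in> Bt t"
    have "norm (grad (ps j) (yh t)) \<le> norm (grad (ps j) z) + norm (grad (ps j) (yh t) - grad (ps j) z)"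
      by (metis diff_add_cancel norm_triangle_ineq add.commute)
    also have "norm (grad (ps j) (yh t) - grad (ps j) z) \<le> L * norm (yh t - z)"
      by (rule lip[OF ps_in[OF t j]])
    also have "\<dots> \<le> L * (K * (norm u + a * D))"
      using yh_bound[OF t] L_pos by (intro mult_left_mono) auto
    finally show "norm (grad (ps j) (yh t)) \<le> norm (grad (ps j) z) + L * K * (norm u + a * D)"
      by (simp add: mult.assoc)
  qed auto
  also have "\<dots> = (1 / b) * (\<Sum>j\<in>Bt t. norm (grad (ps j) z)) + L * K * (norm u + a * D)"
    using b_pos by (simp add: sum.distrib Bt_card field_simps)
  finally show ?thesis .
qed

lemma Gs_perm: "(\<Sum>t<m. \<Sum>j\<in>Bt t. h (ps j)) = (\<Sum>j\<in>{1..n}. h j)"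
  using Bt_sum[of "\<lambda>j. h (ps j)" m] perm_sum[OF perm, of h] m_def by simp

lemma D_bound: "D \<le> 2 * Gs z / b + 2 * m * L * K * norm u"
proof -
  have "D \<le> (\<Sum>t<m. (1 / b) * (\<Sum>j\<in>Bt t. norm (grad (ps j) z)) + L * K * (norm u + a * D))"
  proof -
    have "(\<Sum>t<m. norm (d t)) \<le> (\<Sum>t<m. (1 / b) * (\<Sum>j\<in>Bt t. norm (grad (ps j) z)) + L * K * (norm u + a * D))"
      by (rule sum_mono) (use d_bound in auto)
    then show ?thesis by (simp only: D_def[symmetric])
  qed
  also have "\<dots> = Gs z / b + m * L * K * norm u + (m * L * K * a) * D"
  proof -
    have "(\<Sum>t<m. (1 / b) * (\<Sum>j\<in>Bt t. norm (grad (ps j) z))) = (1 / b) * Gs z"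
      unfolding sum_distrib_left[symmetric] Gs_perm[of "\<lambda>j. norm (grad j z)"] Gs_def ..
    moreover have "(\<Sum>t<m. L * K * (norm u + a * D)) = m * L * K * norm u + (m * L * K * a) * D"
      by (simp add: algebra_simps)
    ultimately show ?thesis by (simp add: sum.distrib)
  qed
  finally have h: "D \<le> Gs z / b + m * L * K * norm u + (m * L * K * a) * D" .
  have "(m * L * K * a) * D \<le> (1/2) * D" using a_small1 D_nonneg by (rule mult_right_mono)
  with h show ?thesis by simp
qed

lemma sumd: "real b *\<^sub>R (\<Sum>t<m. d t) = GF z + E"
proof -
  have "real b *\<^sub>R (\<Sum>t<m. d t) = (\<Sum>t<m. \<Sum>j\<in>Bt t. grad (ps j) (yh t))"
    using b_pos by (simp add: d_def scaleR_sum_right)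
  also have "\<dots> = (\<Sum>t<m. \<Sum>j\<in>Bt t. grad (ps j) z) + E"
    by (simp add: E_def sum_subtractf)
  also have "(\<Sum>t<m. \<Sum>j\<in>Bt t. grad (ps j) z) = GF z"
    using Gs_perm[of "\<lambda>i. grad i z"] by (simp add: GF_def)
  finally show ?thesis .
qed

lemma E_bound: "norm E \<le> n * L * K * (norm u + a * D)"
proof -
  have "norm E \<le> (\<Sum>t<m. norm (\<Sum>j\<in>Bt t. grad (ps j) (yh t) - grad (ps j) z))"
    unfolding E_def by (rule norm_sum)
  also have "\<dots> \<le> (\<Sum>t<m. \<Sum>j\<in>Bt t. norm (grad (ps j) (yh t) - grad (ps j) z))"
    by (intro sum_mono norm_sum)
  also have "\<dots> \<le> (\<Sum>t<m. \<Sum>j\<in>Bt t. L * K * (norm u + a * D))"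
  proof (intro sum_mono)
    fix t j assume t: "t \<in> {..<m}" and j: "j \<in> Bt t"
    have "norm (grad (ps j) (yh t) - grad (ps j) z) \<le> L * norm (yh t - z)"
      using lip ps_in t j by auto
    also have "\<dots> \<le> L * (K * (norm u + a * D))"
      using yh_bound t L_pos by (intro mult_left_mono) auto
    finally show "norm (grad (ps j) (yh t) - grad (ps j) z) \<le> L * K * (norm u + a * D)"
      by (simp add: mult.assoc)
  qed
  also have "\<dots> = n * L * K * (norm u + a * D)"
    by (simp add: Bt_card m_def)
  finally show ?thesis .
qed

lemma aD_bound: "a * D \<le> 2 * a * Gs z / b + norm u"
proof -
  have "a * D \<le> a * (2 * Gs z / b + 2 * m * L * K * norm u)"
    using D_bound a_pos by (intro mult_left_mono) auto
  also have "\<dots> = 2 * a * Gs z / b + (2 * (m * L * K * a)) * norm u" by (simp add: algebra_simps)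
  also have "(2 * (m * L * K * a)) * norm u \<le> 1 * norm u"
    using a_small1 by (intro mult_right_mono) auto
  finally show ?thesis by simp
qed

lemma Gs_nonneg: "Gs x \<ge> 0" unfolding Gs_def by (auto intro: sum_nonneg)

lemma epoch_F: "F (w m) \<le> F z + a * C1 * norm u ^ 2 + a^3 * C2 * F z"
proof -
  define s where "s = a / ((1 - beta) * b)"
  have s_pos: "s > 0" using a_pos beta1 b_pos by (simp add: s_def)
  have wm: "w m - z = - s *\<^sub>R (GF z + E)"
  proof -
    have "w m - z = - (a / (1 - beta)) *\<^sub>R (\<Sum>t<m. d t)" by (simp add: w_sum)
    also have "\<dots> = - s *\<^sub>R (real b *\<^sub>R (\<Sum>t<m. d t))"
      using b_pos by (simp add: s_def)
    finally show ?thesis by (simp add: sumd)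
  qed
  define X where "X = norm (GF z)"
  define Yn where "Yn = norm E"
  have nls: "n * L * s \<le> 1/4"
    using a_small2 beta1 b_pos L_pos by (simp add: s_def field_simps)
  have "F (w m) \<le> F z + GF z \<bullet> (w m - z) + n * L * norm (w m - z)^2"
    by (rule descentF)
  also have "GF z \<bullet> (w m - z) = - s * (X^2 + GF z \<bullet> E)"
    by (simp add: wm inner_add_right X_def power2_norm_eq_inner)
  also have "norm (w m - z)^2 = s^2 * norm (GF z + E)^2"
    using s_pos by (simp add: wm power_mult_distrib)
  finally have h1: "F (w m) \<le> F z - s * (X^2 + GF z \<bullet> E) + n * L * (s^2 * norm (GF z + E)^2)"
    by simp
  have cs: "- (X * Yn) \<le> GF z \<bullet> E"
    using norm_cauchy_schwarz[of "- GF z" E] by (simp add: X_def Yn_def)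
  have tri: "norm (GF z + E)^2 \<le> (X + Yn)^2"
  proof (rule power_mono)
    show "norm (GF z + E) \<le> X + Yn" unfolding X_def Yn_def by (rule norm_triangle_ineq)
  qed simp
  have "n * L * (s^2 * norm (GF z + E)^2) \<le> n * L * (s^2 * (X + Yn)^2)"
    using tri L_pos by (intro mult_left_mono) auto
  also have "\<dots> = (n * L * s) * s * (X + Yn)^2" by (simp add: power2_eq_square)
  also have "\<dots> \<le> (1/4) * s * (X + Yn)^2"
    using nls s_pos by (intro mult_right_mono) auto
  finally have h2: "n * L * (s^2 * norm (GF z + E)^2) \<le> (1/4) * s * (X + Yn)^2" .
  have h3: "- s * (X^2 + GF z \<bullet> E) \<le> - s * X^2 + s * (X * Yn)"
    using mult_left_mono[OF cs, of s] s_pos by (simp add: algebra_simps)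
  have eq: "- s * X^2 + s * (X * Yn) + (1/4) * s * (X + Yn)^2 = s * Yn^2 - (3/4) * s * (X - Yn)^2"
    by (simp add: field_simps power2_eq_square)
  have "0 \<le> (3/4) * s * (X - Yn)^2" using s_pos by simp
  then have Fb: "F (w m) \<le> F z + s * Yn^2"
    using h1 h2 h3 eq by linarith
  have Yb: "Yn \<le> n * L * K * (2 * norm u + 2 * a * Gs z / b)"
  proof -
    have "Yn \<le> n * L * K * (norm u + a * D)" using E_bound by (simp add: Yn_def)
    also have "\<dots> \<le> n * L * K * (2 * norm u + 2 * a * Gs z / b)"
      using aD_bound L_pos K_pos by (intro mult_left_mono) auto
    finally show ?thesis .
  qed
  have "Yn^2 \<le> (n * L * K * (2 * norm u + 2 * a * Gs z / b))^2"
    using Yb by (intro power_mono) (auto simp: Yn_def)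
  also have "\<dots> = (n * L * K)^2 * (2 * norm u + 2 * a * Gs z / b)^2" by (simp add: power_mult_distrib)
  also have "\<dots> \<le> (n * L * K)^2 * (8 * norm u^2 + 8 * a^2 * Gs z^2 / b^2)"
  proof (intro mult_left_mono)
    have "(2 * norm u + 2 * a * Gs z / b)^2 \<le> 2 * (2 * norm u)^2 + 2 * (2 * a * Gs z / b)^2"
      using sum_squares_bound[of "2 * norm u" "2 * a * Gs z / b"] by (simp add: power2_sum)
    then show "(2 * norm u + 2 * a * Gs z / b)^2 \<le> 8 * norm u^2 + 8 * a^2 * Gs z^2 / b^2"
      by (simp add: power_mult_distrib power_divide)
  qed simp
  also have "\<dots> \<le> (n * L * K)^2 * (8 * norm u^2 + 8 * a^2 * (4 * n * L * F z) / b^2)"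
    using Gs_sq[of z] by (intro mult_left_mono add_left_mono divide_right_mono) (auto simp: a_pos)
  finally have Y2: "Yn^2 \<le> (n * L * K)^2 * (8 * norm u^2 + 8 * a^2 * (4 * n * L * F z) / b^2)" .
  have "s * Yn^2 \<le> s * ((n * L * K)^2 * (8 * norm u^2 + 8 * a^2 * (4 * n * L * F z) / b^2))"
    using Y2 s_pos by (intro mult_left_mono) auto
  also have "\<dots> = s * ((n * L * K)^2 * (8 * norm u^2)) + s * ((n * L * K)^2 * (8 * a^2 * (4 * n * L * F z) / b^2))"
    by (simp add: distrib_left)
  also have "s * ((n * L * K)^2 * (8 * norm u^2)) = a * C1 * norm u ^ 2"
    using beta1 b_pos by (simp add: s_def C1_def)
  also have "s * ((n * L * K)^2 * (8 * a^2 * (4 * n * L * F z) / b^2)) = a^3 * C2 * F z"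
  proof -
    have ne: "1 - beta \<noteq> 0" "real b \<noteq> 0" using beta1 b_pos by auto
    show ?thesis using ne by (simp add: s_def C2_def field_simps power2_eq_square power3_eq_cube)
  qed
  finally show ?thesis using Fb by linarith
qed

lemma epoch_u: "norm (v m) \<le> gam * norm u + a * (2 * Gs z / b + 2 * m * L * K * norm u)"
proof -
  have "norm (v m) \<le> gam * norm u + a * D" using v_bound[of m] by (simp add: gam_def D_def)
  also have "a * D \<le> a * (2 * Gs z / b + 2 * m * L * K * norm u)"
    using D_bound a_pos by (intro mult_left_mono) auto
  finally show ?thesis by simp
qed

lemma epoch_u2: "norm (v m)^2 \<le> gam * norm u^2 + a^2 * C3 * F z + a^2 * C4 * norm u^2"
proof -
  define Yv where "Yv = a * (2 * Gs z / b + 2 * m * L * K * norm u)"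
  have "norm (v m)^2 \<le> gam * norm u^2 + Yv^2 / (1 - gam)"
    by (rule sq_convex) (use gam_nonneg gam_lt1 epoch_u in \<open>auto simp: Yv_def\<close>)
  also have "Yv^2 \<le> a^2 * (8 * Gs z^2 / b^2 + 8 * (m * L * K)^2 * norm u^2)"
  proof -
    have "Yv^2 = a^2 * (2 * Gs z / b + 2 * m * L * K * norm u)^2" by (simp add: Yv_def power_mult_distrib)
    also have "(2 * Gs z / b + 2 * m * L * K * norm u)^2 \<le> 2 * (2 * Gs z / b)^2 + 2 * (2 * m * L * K * norm u)^2"
      using sum_squares_bound[of "2 * Gs z / b" "2 * m * L * K * norm u"] by (simp add: power2_sum)
    also have "\<dots> = 8 * Gs z^2 / b^2 + 8 * (m * L * K)^2 * norm u^2"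
      by (simp add: power_mult_distrib power_divide)
    finally show ?thesis by (simp add: mult_left_mono)
  qed
  also have "8 * Gs z^2 / b^2 \<le> 8 * (4 * n * L * F z) / b^2"
    using Gs_sq[of z] by (intro divide_right_mono mult_left_mono) auto
  finally have "norm (v m)^2 \<le> gam * norm u^2 + a^2 * (8 * (4 * n * L * F z) / b^2 + 8 * (m * L * K)^2 * norm u^2) / (1 - gam)"
    using gam_lt1 by (simp add: divide_right_mono mult_left_mono)
  also have "\<dots> = gam * norm u^2 + a^2 * (8 * (4 * n * L * F z) / b^2 / (1 - gam)) + a^2 * (8 * (m * L * K)^2 * norm u^2 / (1 - gam))"
    by (simp add: add_divide_distrib distrib_left)
  also have "8 * (4 * n * L * F z) / b^2 / (1 - gam) = C3 * F z"
    by (simp add: C3_def)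
  also have "8 * (m * L * K)^2 * norm u^2 / (1 - gam) = C4 * norm u^2"
    by (simp add: C4_def)
  finally show ?thesis by (simp add: mult.assoc)
qed

end



lemma contract:
  fixes x e :: "nat \<Rightarrow> real"
  assumes rho: "0 \<le> \<rho>" "\<rho> < 1" and rec: "\<And>k. k \<ge> N \<Longrightarrow> x (Suc k) \<le> \<rho> * x k + e k"
    and e: "e \<longlonglongrightarrow> 0" and xnn: "\<And>k. 0 \<le> x k"
  shows "x \<longlonglongrightarrow> 0"
  unfolding LIMSEQ_iff
proof (intro allI impI)
  fix r :: real assume r: "r > 0"
  define \<epsilon> where "\<epsilon> = r / 3"
  have eps: "\<epsilon> > 0" using r by (simp add: \<epsilon>_def)
  have "\<epsilon> * (1 - \<rho>) > 0" using eps rho by simp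
  then obtain N0 where N0: "\<forall>k\<ge>N0. norm (e k - 0) < \<epsilon> * (1 - \<rho>)"
    using e unfolding LIMSEQ_iff by blast
  define N1 where "N1 = max N N0"
  have ind: "x (N1 + i) \<le> \<epsilon> + \<rho>^i * x N1" for i
  proof (induction i)
    case 0 then show ?case using eps by simp
  next
    case (Suc i)
    have k: "N1 + i \<ge> N" "N1 + i \<ge> N0" by (auto simp: N1_def)
    have "x (N1 + Suc i) \<le> \<rho> * x (N1 + i) + e (N1 + i)" using rec[OF k(1)] by simp
    also have "\<dots> \<le> \<rho> * (\<epsilon> + \<rho>^i * x N1) + \<epsilon> * (1 - \<rho>)"
      using Suc rho N0 k(2) by (intro add_mono mult_left_mono) auto
    also have "\<dots> = \<epsilon> + \<rho>^Suc i * x N1" by (simp add: algebra_simps)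
    finally show ?case .
  qed
  have "(\<lambda>i. \<rho>^i * x N1) \<longlonglongrightarrow> 0"
    using rho by (intro tendsto_mult_left_zero LIMSEQ_power_zero) auto
  then obtain i0 where i0: "\<forall>i\<ge>i0. norm (\<rho>^i * x N1 - 0) < \<epsilon>"
    using eps unfolding LIMSEQ_iff by blast
  show "\<exists>no. \<forall>n\<ge>no. norm (x n - 0) < r"
  proof (intro exI allI impI)
    fix k assume k: "k \<ge> N1 + i0"
    define i where "i = k - N1"
    have i: "k = N1 + i" "i \<ge> i0" using k by (auto simp: i_def)
    have "x k \<le> \<epsilon> + \<rho>^i * x N1" using ind i by simp
    also have "\<rho>^i * x N1 < \<epsilon>" using i0 i by auto
    finally have "x k < 2 * \<epsilon>" by simp
    then show "norm (x k - 0) < r" using xnn[of k] by (simp add: \<epsilon>_def)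
  qed
qed

context rrm_setup begin

definition "Bc = 2 * C1 / (1 - gam)"
definition "Cc = C2 + Bc * C3"
definition "Zf st = (1 / (1 - beta)) *\<^sub>R snd st - (beta / (1 - beta)) *\<^sub>R fst st"
definition "Uf st = norm (snd st - fst st)"

lemma C1_pos: "C1 > 0" using L_pos K_pos n_pos b_pos beta1 by (simp add: C1_def)
lemma C2_nonneg: "C2 \<ge> 0" using L_pos K_pos n_pos b_pos beta1 by (simp add: C2_def)
lemma C3_nonneg: "C3 \<ge> 0" using L_pos n_pos b_pos gam_lt1 by (simp add: C3_def)
lemma C4_pos: "C4 > 0" using L_pos K_pos m_pos gam_lt1 by (simp add: C4_def)
lemma Bc_pos: "Bc > 0" using C1_pos gam_lt1 by (simp add: Bc_def)
lemma Cc_nonneg: "Cc \<ge> 0" using C2_nonneg C3_nonneg Bc_pos by (simp add: Cc_def)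

lemma epoch_step:
  assumes a: "0 < a" "real m * L * K * a \<le> 1/2" "4 * real n * L * a \<le> (1 - beta) * real b"
    "Bc * a^2 * C4 \<le> C1" "2 * a * m * L * K \<le> (1 - gam) / 2"
    and ps: "ps permutes {1..n}" and a': "0 \<le> a'" "a' \<le> a"
  shows "F (Zf (rrm_inner grad b a beta lam ps (p, q) m)) + Bc * a' * Uf (rrm_inner grad b a beta lam ps (p, q) m)^2
           \<le> (1 + Cc * a^3) * (F (Zf (p, q)) + Bc * a * Uf (p, q)^2)"
    and "Uf (rrm_inner grad b a beta lam ps (p, q) m) \<le> (1 + gam) / 2 * Uf (p, q) + 2 * a * Gs (Zf (p, q)) / b"
proof -
  interpret E: rrm_epoch f grad n b m L fbar beta lam a ps p q
    by (intro rrm_epoch.intro rrm_setup_axioms rrm_epoch_axioms.intro) (use a ps in auto)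
  let ?st = "rrm_inner grad b a beta lam ps (p, q) m"
  have z: "E.z = Zf (p, q)" by (simp add: E.z_def E.w_def E.Y_def Zf_def)
  have u: "norm E.u = Uf (p, q)" by (simp add: E.u_def E.v_def E.Y_def Uf_def)
  have wm: "E.w m = Zf ?st" by (simp add: E.w_def E.Y_def Zf_def)
  have vm: "norm (E.v m) = Uf ?st" by (simp add: E.v_def E.Y_def Uf_def)
  define FF where "FF = F (Zf (p, q))"
  define U where "U = Uf (p, q)"
  have FF: "FF \<ge> 0" by (simp add: FF_def F_nonneg)
  have h1: "F (Zf ?st) \<le> FF + a * C1 * U^2 + a^3 * C2 * FF"
    using E.epoch_F by (simp add: z u wm FF_def U_def)
  have h2: "Uf ?st ^ 2 \<le> gam * U^2 + a^2 * C3 * FF + a^2 * C4 * U^2"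
    using E.epoch_u2 by (simp add: z u vm FF_def U_def)
  have "Bc * a' * Uf ?st ^ 2 \<le> Bc * a * Uf ?st ^ 2"
    using a' Bc_pos by (intro mult_right_mono mult_left_mono) auto
  also have "\<dots> \<le> Bc * a * (gam * U^2 + a^2 * C3 * FF + a^2 * C4 * U^2)"
    using h2 Bc_pos a by (intro mult_left_mono) auto
  finally have h3: "Bc * a' * Uf ?st ^ 2 \<le> Bc * a * (gam * U^2 + a^2 * C3 * FF + a^2 * C4 * U^2)" .
  have key: "a * U^2 * (C1 + Bc * gam + Bc * a^2 * C4) \<le> a * U^2 * Bc"
  proof (rule mult_left_mono)
    have "Bc * (1 - gam) = 2 * C1" using gam_lt1 by (simp add: Bc_def)
    then show "C1 + Bc * gam + Bc * a^2 * C4 \<le> Bc" using a(4) by (simp add: algebra_simps)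
  qed (use a in simp)
  have "F (Zf ?st) + Bc * a' * Uf ?st ^ 2 \<le> FF + a^3 * Cc * FF + a * U^2 * (C1 + Bc * gam + Bc * a^2 * C4)"
  proof -
    have e1: "Bc * a * (gam * U^2 + a^2 * C3 * FF + a^2 * C4 * U^2) = a * U^2 * (Bc * gam) + a^3 * (Bc * C3) * FF + a * U^2 * (Bc * a^2 * C4)"
      by (simp add: algebra_simps power3_eq_cube power2_eq_square)
    have e3: "a^3 * Cc * FF = a^3 * C2 * FF + a^3 * (Bc * C3) * FF" by (simp add: Cc_def algebra_simps)
    have e4: "a * U^2 * (C1 + Bc * gam + Bc * a^2 * C4) = a * C1 * U^2 + a * U^2 * (Bc * gam) + a * U^2 * (Bc * a^2 * C4)"
      by (simp add: algebra_simps)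
    show ?thesis using h1 h3 e1 e3 e4 by linarith
  qed
  also have "\<dots> \<le> FF + a^3 * Cc * FF + a * U^2 * Bc" using key by simp
  also have "\<dots> \<le> (1 + Cc * a^3) * (FF + Bc * a * U^2)"
  proof -
    have "0 \<le> Cc * a^3 * (Bc * a * U^2)" using Cc_nonneg Bc_pos a by simp
    then show ?thesis by (simp add: algebra_simps)
  qed
  finally show "F (Zf ?st) + Bc * a' * Uf ?st ^ 2 \<le> (1 + Cc * a^3) * (F (Zf (p, q)) + Bc * a * Uf (p, q)^2)"
    by (simp add: FF_def U_def)
  have "Uf ?st \<le> gam * U + a * (2 * Gs (Zf (p, q)) / b + 2 * m * L * K * U)"
    using E.epoch_u by (simp add: z u vm U_def)
  also have "\<dots> = (gam + 2 * a * m * L * K) * U + 2 * a * Gs (Zf (p, q)) / b"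
    by (simp add: algebra_simps)
  also have "\<dots> \<le> (1 + gam) / 2 * U + 2 * a * Gs (Zf (p, q)) / b"
    using a(5) by (intro add_right_mono mult_right_mono) (auto simp: U_def Uf_def)
  finally show "Uf ?st \<le> (1 + gam) / 2 * Uf (p, q) + 2 * a * Gs (Zf (p, q)) / b"
    by (simp add: U_def)
qed

end



theorem lemma5p3:
  fixes f :: "nat \<Rightarrow> 'a::euclidean_space \<Rightarrow> real"
    and grad :: "nat \<Rightarrow> 'a \<Rightarrow> 'a"
    and n b m :: nat and L fbar beta lam :: real
    and alpha :: "nat \<Rightarrow> real" and ps :: "nat \<Rightarrow> nat \<Rightarrow> nat" and x1 :: 'a
  assumes n_pos: "n \<ge> 1" and b_pos: "b \<ge> 1" and m_def: "n = m * b"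
    and deriv: "\<And>i x. i \<in> {1..n} \<Longrightarrow> (f i has_derivative (\<lambda>h. grad i x \<bullet> h)) (at x)"
    and grad_cont: "\<And>i. i \<in> {1..n} \<Longrightarrow> continuous_on UNIV (grad i)"
    and L_pos: "L > 0"
    and lip: "\<And>i x y. i \<in> {1..n} \<Longrightarrow> norm (grad i x - grad i y) \<le> L * norm (x - y)"
    and lower: "\<And>i x. i \<in> {1..n} \<Longrightarrow> f i x \<ge> fbar"
    and alpha_pos: "\<And>k. k \<ge> 1 \<Longrightarrow> alpha k > 0"
    and alpha_noninc: "\<And>k. k \<ge> 1 \<Longrightarrow> alpha (Suc k) \<le> alpha k"
    and beta: "0 \<le> beta" "beta < 1"
    and lam: "0 \<le> lam" "lam \<le> beta / (1 - beta)"
    and alpha_bound: "\<And>k. k \<ge> 1 \<Longrightarrow>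
         alpha k \<le> (1 - beta) * (1 - beta ^ m) / (4 * L * real m)"
    and alpha_div: "filterlim (\<lambda>N. \<Sum>k=1..N. alpha k) at_top sequentially"
    and alpha_cube: "summable (\<lambda>k. alpha (Suc k) ^ 3)"
    and perm: "\<And>k. k \<ge> 1 \<Longrightarrow> ps k permutes {1..n}"
  shows "(\<lambda>k. norm (
            ((1 / (1 - beta)) *\<^sub>R snd (rrm_state grad b m alpha beta lam ps x1 k)
              - (beta / (1 - beta)) *\<^sub>R fst (rrm_state grad b m alpha beta lam ps x1 k))
            - snd (rrm_state grad b m alpha beta lam ps x1 k))) \<longlonglongrightarrow> 0"
proof -
  interpret R: rrm_setup f grad n b m L fbar beta lam
    by (rule rrm_setup.intro) (use n_pos b_pos m_def deriv L_pos lip lower beta lam in auto)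
  define S where "S k = rrm_state grad b m alpha beta lam ps x1 k" for k
  have S_Suc: "S (Suc k) = rrm_inner grad b (alpha k) beta lam (ps k) (S k) m" if "k \<ge> 1" for k
    using that by (cases k) (auto simp: S_def)
  have mLK: "real m * L * R.K > 0" using R.m_pos L_pos R.K_pos by simp
  define e1 where "e1 = 1 / (2 * (real m * L * R.K))"
  define e2 where "e2 = (1 - beta) * real b / (4 * real n * L)"
  define e3 where "e3 = min 1 (R.C1 / (R.Bc * R.C4))"
  define e4 where "e4 = (1 - R.gam) / (4 * (real m * L * R.K))"
  define eps0 where "eps0 = min (min e1 e2) (min e3 e4)"
  have BC4: "R.Bc * R.C4 > 0" using R.Bc_pos R.C4_pos by simp
  have eps0_pos: "eps0 > 0"
  proof -
    have "e1 > 0" unfolding e1_def using mLK by (intro divide_pos_pos) auto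
    moreover have "e2 > 0" using beta b_pos n_pos L_pos by (simp add: e2_def)
    moreover have "e3 > 0" using R.C1_pos BC4 by (simp add: e3_def)
    moreover have "e4 > 0" unfolding e4_def using mLK R.gam_lt1 by (intro divide_pos_pos) auto
    ultimately show ?thesis by (simp add: eps0_def)
  qed
  have conds: "real m * L * R.K * a \<le> 1/2 \<and> 4 * real n * L * a \<le> (1 - beta) * real b
      \<and> R.Bc * a^2 * R.C4 \<le> R.C1 \<and> 2 * a * m * L * R.K \<le> (1 - R.gam) / 2"
    if a: "0 < a" "a \<le> eps0" for a
  proof (intro conjI)
    have "a \<le> e1" using a by (simp add: eps0_def)
    then have "real m * L * R.K * a \<le> real m * L * R.K * e1" using mLK by (intro mult_left_mono) auto
    also have "\<dots> = 1/2"
    proof -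
      have "\<And>X::real. X > 0 \<Longrightarrow> X * (1 / (2 * X)) = 1/2" by simp
      from this[OF mLK] show ?thesis by (simp add: e1_def)
    qed
    finally show "real m * L * R.K * a \<le> 1/2" .
    have "a \<le> e2" using a by (simp add: eps0_def)
    then have "4 * real n * L * a \<le> 4 * real n * L * e2" using L_pos by (intro mult_left_mono) auto
    also have "\<dots> = (1 - beta) * real b" using L_pos n_pos by (simp add: e2_def)
    finally show "4 * real n * L * a \<le> (1 - beta) * real b" .
    have a3: "a \<le> 1" "a \<le> R.C1 / (R.Bc * R.C4)" using a by (auto simp: eps0_def e3_def)
    have "R.Bc * a^2 * R.C4 = (R.Bc * R.C4) * a * a" by (simp add: power2_eq_square)
    also have "\<dots> \<le> (R.Bc * R.C4) * a * 1" using a3 a BC4 by (intro mult_left_mono) auto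
    also have "\<dots> = (R.Bc * R.C4) * a" by simp
    also have "\<dots> \<le> (R.Bc * R.C4) * (R.C1 / (R.Bc * R.C4))"
      by (rule mult_left_mono[OF a3(2)]) (use BC4 in simp)
    also have "\<dots> = R.C1"
    proof -
      have "\<And>X Y::real. X > 0 \<Longrightarrow> X * (Y / X) = Y" by simp
      from this[OF BC4] show ?thesis .
    qed
    finally show "R.Bc * a^2 * R.C4 \<le> R.C1" .
    have "a \<le> e4" using a by (simp add: eps0_def)
    then have "2 * (real m * L * R.K) * a \<le> 2 * (real m * L * R.K) * e4" using mLK by (intro mult_left_mono) auto
    also have "\<dots> = (1 - R.gam) / 2"
    proof -
      have "\<And>X::real. X > 0 \<Longrightarrow> 2 * X * ((1 - R.gam) / (4 * X)) = (1 - R.gam) / 2" by simp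
      from this[OF mLK] show ?thesis by (simp add: e4_def)
    qed
    finally show "2 * a * m * L * R.K \<le> (1 - R.gam) / 2" by (simp add: algebra_simps)
  qed
  have a3lim: "(\<lambda>k. alpha (Suc k) ^ 3) \<longlonglongrightarrow> 0" by (rule summable_LIMSEQ_zero[OF alpha_cube])
  have alim: "alpha \<longlonglongrightarrow> 0"
  proof (rule LIMSEQ_imp_Suc)
    show "(\<lambda>k. alpha (Suc k)) \<longlonglongrightarrow> 0"
      unfolding LIMSEQ_iff
    proof (intro allI impI)
      fix r :: real assume r: "r > 0"
      have r3: "r^3 > 0" using r by simp
      obtain no where no: "\<forall>k\<ge>no. norm (alpha (Suc k) ^ 3 - 0) < r^3"
        using a3lim[unfolded LIMSEQ_iff, rule_format, OF r3] by blast
      show "\<exists>no. \<forall>k\<ge>no. norm (alpha (Suc k) - 0) < r"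
      proof (intro exI[of _ no] allI impI)
        fix k assume k: "k \<ge> no"
        have ap: "alpha (Suc k) > 0" using alpha_pos[of "Suc k"] by simp
        have "norm (alpha (Suc k) ^ 3 - 0) < r^3" using no k by blast
        then have "alpha (Suc k) ^ 3 < r^3" using ap by simp
        then have "alpha (Suc k) < r" using power_less_imp_less_base[of "alpha (Suc k)" 3 r] r by simp
        then show "norm (alpha (Suc k) - 0) < r" using ap by simp
      qed
    qed
  qed
  obtain no where no: "\<forall>k\<ge>no. norm (alpha k - 0) < eps0"
    using alim eps0_pos unfolding LIMSEQ_iff by blast
  define K0 where "K0 = max 1 no"
  have K0: "K0 \<ge> 1" by (simp add: K0_def)
  have aK: "0 < alpha k \<and> alpha k \<le> eps0" if k: "k \<ge> K0" for k
  proof -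
    have k1: "k \<ge> 1" "k \<ge> no" using k by (auto simp: K0_def)
    have "norm (alpha k - 0) < eps0" using no k1(2) by blast
    then show ?thesis using alpha_pos[OF k1(1)] by simp
  qed
  define Psi where "Psi k = R.F (R.Zf (S k)) + R.Bc * alpha k * R.Uf (S k)^2" for k
  define rho where "rho = (1 + R.gam) / 2"
  have step: "Psi (Suc k) \<le> (1 + R.Cc * alpha k^3) * Psi k \<and>
      R.Uf (S (Suc k)) \<le> rho * R.Uf (S k) + 2 * alpha k * R.Gs (R.Zf (S k)) / b"
    if k: "k \<ge> K0" for k
  proof -
    obtain p q where pq: "S k = (p, q)" by (cases "S k")
    have k1: "k \<ge> 1" using k K0 by simp
    have SS: "S (Suc k) = rrm_inner grad b (alpha k) beta lam (ps k) (p, q) m"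
      using S_Suc[OF k1] pq by simp
    have ak: "0 < alpha k" "alpha k \<le> eps0" using aK[OF k] by auto
    note c = conds[OF ak]
    have a': "0 \<le> alpha (Suc k)" "alpha (Suc k) \<le> alpha k"
      using alpha_pos[of "Suc k"] alpha_noninc[OF k1] by auto
    from c have c1: "real m * L * R.K * alpha k \<le> 1/2"
      and c2: "4 * real n * L * alpha k \<le> (1 - beta) * real b"
      and c3: "R.Bc * (alpha k)^2 * R.C4 \<le> R.C1"
      and c4: "2 * alpha k * m * L * R.K \<le> (1 - R.gam) / 2" by auto
    note es1 = R.epoch_step(1)[OF ak(1) c1 c2 c3 c4 perm[OF k1] a', of p q]
    note es2 = R.epoch_step(2)[OF ak(1) c1 c2 c3 c4 perm[OF k1] a', of p q]
    show ?thesis unfolding Psi_def SS pq rho_def using es1 es2 by simp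
  qed
  have Psi_nn: "Psi k \<ge> 0" if "k \<ge> 1" for k
    using R.F_nonneg R.Bc_pos alpha_pos[OF that] by (simp add: Psi_def)
  define T where "T = suminf (\<lambda>k. alpha (Suc k) ^ 3)"
  have sumT: "(\<Sum>j<i. alpha (K0 + j) ^ 3) \<le> T" for i
  proof -
    have "(\<Sum>j<i. alpha (K0 + j) ^ 3) = (\<Sum>j<i. (\<lambda>k. alpha (Suc k) ^ 3) (K0 - 1 + j))"
      using K0 by (intro sum.cong) auto
    also have "\<dots> = sum (\<lambda>k. alpha (Suc k) ^ 3) ((\<lambda>j. K0 - 1 + j) ` {..<i})"
      by (subst sum.reindex) (auto simp: inj_on_def)
    also have "\<dots> \<le> T" unfolding T_def
      by (rule sum_le_suminf[OF alpha_cube]) (use alpha_pos in \<open>auto intro: less_imp_le\<close>)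
    finally show ?thesis .
  qed
  have bound: "Psi (K0 + i) \<le> Psi K0 * exp (R.Cc * (\<Sum>j<i. alpha (K0 + j) ^ 3))" for i
  proof (induction i)
    case 0 then show ?case by simp
  next
    case (Suc i)
    have "Psi (K0 + Suc i) \<le> (1 + R.Cc * alpha (K0 + i)^3) * Psi (K0 + i)"
      using step[of "K0 + i"] by simp
    also have "\<dots> \<le> exp (R.Cc * alpha (K0 + i)^3) * (Psi K0 * exp (R.Cc * (\<Sum>j<i. alpha (K0 + j) ^ 3)))"
      using Suc Psi_nn[of "K0 + i"] K0 by (intro mult_mono) auto
    also have "\<dots> = Psi K0 * exp (R.Cc * (\<Sum>j<Suc i. alpha (K0 + j) ^ 3))"
      by (simp add: exp_add[symmetric] algebra_simps)
    finally show ?case .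
  qed
  define M where "M = Psi K0 * exp (R.Cc * T)"
  have FM: "R.F (R.Zf (S k)) \<le> M" if k: "k \<ge> K0" for k
  proof -
    obtain i where i: "k = K0 + i" using k le_Suc_ex by blast
    have "R.F (R.Zf (S k)) \<le> Psi k"
      using R.Bc_pos alpha_pos[of k] k K0 by (simp add: Psi_def)
    also have "\<dots> \<le> Psi K0 * exp (R.Cc * (\<Sum>j<i. alpha (K0 + j) ^ 3))" using bound i by simp
    also have "\<dots> \<le> M" unfolding M_def
      using Psi_nn[OF K0] R.Cc_nonneg sumT[of i] by (intro mult_left_mono) (auto intro: mult_left_mono)
    finally show ?thesis .
  qed
  define G where "G = 1 + 4 * real n * L * M"
  have GsG: "R.Gs (R.Zf (S k)) \<le> G" if k: "k \<ge> K0" for k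
  proof -
    have "R.Gs (R.Zf (S k))^2 \<le> 4 * real n * L * M"
    proof -
      have "4 * real n * L * R.F (R.Zf (S k)) \<le> 4 * real n * L * M"
        by (rule mult_left_mono[OF FM[OF k]]) (use L_pos in simp)
      then show ?thesis using R.Gs_sq[of "R.Zf (S k)"] by linarith
    qed
    moreover have "R.Gs (R.Zf (S k)) \<ge> 0" by (simp add: R.Gs_def sum_nonneg)
    ultimately show ?thesis unfolding G_def
    proof -
      fix x c :: real assume h: "x^2 \<le> c" "0 \<le> x"
      show "x \<le> 1 + c"
      proof (cases "x \<le> 1")
        case True then show ?thesis using h(1) by (smt (verit) zero_le_power2)
      next
        case False
        then have "x * 1 \<le> x * x" using h(2) by (intro mult_left_mono) auto
        then show ?thesis using h(1) by (simp add: power2_eq_square)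
      qed
    qed
  qed
  have Ulim: "(\<lambda>k. R.Uf (S k)) \<longlonglongrightarrow> 0"
  proof (rule contract[of rho K0])
    show "0 \<le> rho" "rho < 1" using R.gam_nonneg R.gam_lt1 by (auto simp: rho_def)
    show "R.Uf (S (Suc k)) \<le> rho * R.Uf (S k) + alpha k * (2 * G / b)" if "K0 \<le> k" for k
    proof -
      have "2 * alpha k * R.Gs (R.Zf (S k)) / b \<le> 2 * alpha k * G / b"
        using GsG[OF that] aK[OF that] b_pos by (intro divide_right_mono mult_left_mono) auto
      moreover have "2 * alpha k * G / real b = alpha k * (2 * G / real b)" by simp
      ultimately show ?thesis using step[OF that, THEN conjunct2] by linarith
    qed
    show "(\<lambda>k. alpha k * (2 * G / b)) \<longlonglongrightarrow> 0" by (rule tendsto_mult_left_zero[OF alim])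
    show "0 \<le> R.Uf (S k)" for k by (simp add: R.Uf_def)
  qed
  have eq: "norm (((1 / (1 - beta)) *\<^sub>R snd (S k) - (beta / (1 - beta)) *\<^sub>R fst (S k)) - snd (S k))
      = (beta / (1 - beta)) * R.Uf (S k)" for k
  proof -
    have ne: "1 - beta \<noteq> 0" using beta by simp
    have e: "1 / (1 - beta) = 1 + beta / (1 - beta)" using ne by (simp add: field_simps)
    have "((1 / (1 - beta)) *\<^sub>R snd (S k) - (beta / (1 - beta)) *\<^sub>R fst (S k)) - snd (S k)
        = (beta / (1 - beta)) *\<^sub>R (snd (S k) - fst (S k))"
      unfolding e by (simp add: algebra_simps)
    then show ?thesis using beta by (simp add: R.Uf_def)
  qed
  show ?thesis unfolding S_def[symmetric] eq
    by (rule tendsto_mult_right_zero[OF Ulim])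
qed


end
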